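(* Let $n\ge 3$. For any word $w(A,B)\in\mathbb F_2=\langle A,B\rangle$, the kernel $\operatorname{Ker}(\Theta_n^w)$ contains a subgroup isomorphic to the free group of rank $2$.
   Context: For $n\ge 2$, the flat virtual braid group $FVB_n$ is the group with generators $\sigma_1,\dots,\sigma_{n-1},\rho_1,\dots,\rho_{n-1}$ and defining relations: $\sigma_i^2=1$, $\rho_i^2=1$ for $1\le i\le n-1$; $\sigma_i\sigma_{i+1}\sigma_i=\sigma_{i+1}\sigma_i\sigma_{i+1}$, $\rho_i\rho_{i+1}\rho_i=\rho_{i+1}\rho_i\rho_{i+1}$ and $\rho_i\rho_{i+1}\sigma_i=\sigma_{i+1}\rho_i\rho_{i+1}$ for $1\le i\le n-2$; $\sigma_i\sigma_j=\sigma_j\sigma_i$, $\rho_i\rho_j=\rho_j\rho_i$ and $\rho_i\sigma_j=\sigma_j\rho_i$ for $|i-j|\ge 2$. $\mathbb F_{2n}$ is the free group on $x_1,\dots,x_n,y_1,\dots,y_n$; automorphisms compose left to right, $(\varphi\psi)(f)=\psi(\varphi(f))$; generators not mentioned are fixed. For $w(A,B)\in\mathbb F_2$, $\Theta_n^w\colon FVB_n\to\mathrm{Aut}(\mathbb F_{2n})$ is the homomorphism given by $\Theta_n^w(\sigma_i): x_i\mapsto x_{i+1}w(y_i,y_{i+1}),\ x_{i+1}\mapsto x_i w(y_i,y_{i+1})^{-1}$ and $\Theta_n^w(\rho_i): x_i\mapsto x_{i+1},\ x_{i+1}\mapsto x_i,\ y_i\mapsto y_{i+1},\ y_{i+1}\mapsto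 y_i$. *)

theory Defs
  imports "HOL-Algebra.Algebra"
begin

text \<open>A letter is a pair (generator, sign); sign True means the generator,
  sign False its inverse.\<close>

type_synonym 'a fword = "('a \<times> bool) list"

fun red_cons :: "'a \<times> bool \<Rightarrow> 'a fword \<Rightarrow> 'a fword" where
  "red_cons a [] = [a]"
| "red_cons a (b # bs) =
     (if fst a = fst b \<and> snd a \<noteq> snd b then bs else a # b # bs)"

definition reduce :: "'a fword \<Rightarrow> 'a fword" where
  "reduce ws = foldr red_cons ws []"

fun reduced :: "'a fword \<Rightarrow> bool" where
  "reduced [] = True"
| "reduced [a] = True"
| "reduced (a # b # bs) =
     (\<not> (fst a = fst b \<and> snd a \<noteq> snd b) \<and> reduced (b # bs))"

definition inv_w :: "'a fword \<Rightarrow> 'a fword" where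
  "inv_w ws = rev (map (\<lambda>(a, e). (a, \<not> e)) ws)"

definition free_grp :: "'a set \<Rightarrow> 'a fword monoid" where
  "free_grp S = \<lparr> carrier = {ws. reduced ws \<and> fst ` set ws \<subseteq> S},
                  monoid.mult = (\<lambda>x y. reduce (x @ y)),
                  monoid.one = [] \<rparr>"

definition ext :: "('a \<Rightarrow> 'b fword) \<Rightarrow> 'a fword \<Rightarrow> 'b fword" where
  "ext f ws = reduce (concat (map (\<lambda>(a, e). if e then f a else inv_w (f a)) ws))"

text \<open>Generators of F_{2n}: (False, i) is x_i and (True, i) is y_i, for 1 \<le> i \<le> n.
  Elements of F_2 = <A,B>: letter False is A, letter True is B.\<close>

definition F2n :: "nat \<Rightarrow> (bool \<times> nat) fword monoid" where
  "F2n n = free_grp (UNIV \<times> {1..n})"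

definition F2 :: "bool fword monoid" where
  "F2 = free_grp (UNIV :: bool set)"

text \<open>w(y_i, y_{i+1}) as an element of F_{2n}.\<close>
definition w_sub :: "bool fword \<Rightarrow> nat \<Rightarrow> (bool \<times> nat) fword" where
  "w_sub w i = ext (\<lambda>b. [((True, if b then i + 1 else i), True)]) w"

definition sig_img :: "bool fword \<Rightarrow> nat \<Rightarrow> bool \<times> nat \<Rightarrow> (bool \<times> nat) fword" where
  "sig_img w i g =
     (if g = (False, i) then reduce ([((False, i + 1), True)] @ w_sub w i)
      else if g = (False, i + 1) then reduce ([((False, i), True)] @ inv_w (w_sub w i))
      else [(g, True)])"

definition rho_img :: "nat \<Rightarrow> bool \<times> nat \<Rightarrow> (bool \<times> nat) fword" where
  "rho_img i g =
     (if snd g = i then [((fst g, i + 1), True)]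
      else if snd g = i + 1 then [((fst g, i), True)]
      else [(g, True)])"

text \<open>Generators of FVB_n: (False, i) is sigma_i and (True, i) is rho_i, 1 \<le> i \<le> n-1.
  All generators are involutions, so positive words suffice.\<close>

definition sg :: "nat \<Rightarrow> bool \<times> nat" where "sg i = (False, i)"
definition rh :: "nat \<Rightarrow> bool \<times> nat" where "rh i = (True, i)"

definition fvb_rels :: "nat \<Rightarrow> ((bool \<times> nat) list \<times> (bool \<times> nat) list) set" where
  "fvb_rels n =
     {([sg i, sg i], []) | i. 1 \<le> i \<and> i \<le> n - 1}
   \<union> {([rh i, rh i], []) | i. 1 \<le> i \<and> i \<le> n - 1}
   \<union> {([sg i, sg (i+1), sg i], [sg (i+1), sg i, sg (i+1)]) | i. 1 \<le> i \<and> i \<le> n - 2}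
   \<union> {([rh i, rh (i+1), rh i], [rh (i+1), rh i, rh (i+1)]) | i. 1 \<le> i \<and> i \<le> n - 2}
   \<union> {([rh i, rh (i+1), sg i], [sg (i+1), rh i, rh (i+1)]) | i. 1 \<le> i \<and> i \<le> n - 2}
   \<union> {([sg i, sg j], [sg j, sg i]) | i j. 1 \<le> i \<and> i \<le> n - 1 \<and> 1 \<le> j \<and> j \<le> n - 1
        \<and> (i + 2 \<le> j \<or> j + 2 \<le> i)}
   \<union> {([rh i, rh j], [rh j, rh i]) | i j. 1 \<le> i \<and> i \<le> n - 1 \<and> 1 \<le> j \<and> j \<le> n - 1
        \<and> (i + 2 \<le> j \<or> j + 2 \<le> i)}
   \<union> {([rh i, sg j], [sg j, rh i]) | i j. 1 \<le> i \<and> i \<le> n - 1 \<and> 1 \<le> j \<and> j \<le> n - 1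
        \<and> (i + 2 \<le> j \<or> j + 2 \<le> i)}"

definition fvb_gens :: "nat \<Rightarrow> (bool \<times> nat) set" where
  "fvb_gens n = UNIV \<times> {1..n - 1}"

inductive fvb_eq :: "nat \<Rightarrow> (bool \<times> nat) list \<Rightarrow> (bool \<times> nat) list \<Rightarrow> bool"
  for n where
  refl: "fvb_eq n u u"
| sym: "fvb_eq n u v \<Longrightarrow> fvb_eq n v u"
| trans: "fvb_eq n u v \<Longrightarrow> fvb_eq n v x \<Longrightarrow> fvb_eq n u x"
| rel: "(l, r) \<in> fvb_rels n \<Longrightarrow> fvb_eq n (u @ l @ v) (u @ r @ v)"

definition fvb_class :: "nat \<Rightarrow> (bool \<times> nat) list \<Rightarrow> (bool \<times> nat) list set" where
  "fvb_class n u = {v. fvb_eq n u v}"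

definition FVB :: "nat \<Rightarrow> (bool \<times> nat) list set monoid" where
  "FVB n = \<lparr> carrier = {fvb_class n u | u. set u \<subseteq> fvb_gens n},
             monoid.mult = (\<lambda>A B. {x. \<exists>u\<in>A. \<exists>v\<in>B. fvb_eq n (u @ v) x}),
             monoid.one = fvb_class n [] \<rparr>"

definition theta_gen :: "bool fword \<Rightarrow> bool \<times> nat \<Rightarrow> (bool \<times> nat) fword \<Rightarrow> (bool \<times> nat) fword" where
  "theta_gen w g = (if fst g then ext (rho_img (snd g)) else ext (sig_img w (snd g)))"

text \<open>Automorphisms compose left to right: (phi psi)(f) = psi(phi(f)).\<close>
fun theta_word :: "bool fword \<Rightarrow> (bool \<times> nat) list \<Rightarrow> (bool \<times> nat) fword \<Rightarrow> (bool \<times> nat) fword" where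
  "theta_word w [] = id"
| "theta_word w (g # gs) = theta_word w gs \<circ> theta_gen w g"

definition Theta :: "nat \<Rightarrow> bool fword \<Rightarrow> (bool \<times> nat) list set \<Rightarrow> (bool \<times> nat) fword \<Rightarrow> (bool \<times> nat) fword" where
  "Theta n w \<beta> = theta_word w (SOME u. u \<in> \<beta>)"

definition ker_Theta :: "nat \<Rightarrow> bool fword \<Rightarrow> (bool \<times> nat) list set set" where
  "ker_Theta n w = {\<beta> \<in> carrier (FVB n). \<forall>f \<in> carrier (F2n n). Theta n w \<beta> f = f}"

end

theory Submission
  imports Defs
begin


definition iv :: "'a \<times> bool \<Rightarrow> 'a \<times> bool" where "iv a = (fst a, \<not> snd a)"

lemma cancel_iff: "(fst a = fst b \<and> snd a \<noteq> snd b) \<longleftrightarrow> b = iv a"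
  by (cases a; cases b) (auto simp: iv_def)

lemma iv_iv[simp]: "iv (iv a) = a" by (cases a) (simp add: iv_def)
lemma fst_iv[simp]: "fst (iv a) = fst a" by (simp add: iv_def)
lemma snd_iv[simp]: "snd (iv a) = (\<not> snd a)" by (simp add: iv_def)
lemma iv_neq[simp]: "iv a \<noteq> a" "a \<noteq> iv a" by (cases a; simp add: iv_def)+

lemma reduced_simps3[simp]: "reduced (a # b # bs) = (b \<noteq> iv a \<and> reduced (b # bs))"
  by (simp only: reduced.simps cancel_iff)
declare reduced.simps(3)[simp del]

lemma red_cons_simps[simp]:
  "red_cons a (b # bs) = (if b = iv a then bs else a # b # bs)"
  by (simp only: red_cons.simps cancel_iff)

declare red_cons.simps(2)[simp del]

lemma reduced_tl: "reduced (b # bs) \<Longrightarrow> reduced bs"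
  by (cases bs) auto

lemma reduced_red_cons: "reduced L \<Longrightarrow> reduced (red_cons a L)"
  by (cases L) (auto dest: reduced_tl)

lemma reduced_foldr: "reduced R \<Longrightarrow> reduced (foldr red_cons xs R)"
  by (induction xs) (auto intro: reduced_red_cons)

lemma reduced_reduce[simp]: "reduced (reduce xs)"
  unfolding reduce_def by (rule reduced_foldr) simp

lemma rc_cancel:
  assumes "reduced R" shows "red_cons a (red_cons (iv a) R) = R"
proof (cases R)
  case Nil then show ?thesis by (simp add: red_cons_simps)
next
  case (Cons c R')
  show ?thesis
  proof (cases "c = a")
    case True
    with Cons assms have "red_cons (iv a) R = R'" by (simp add: red_cons_simps)
    moreover have "red_cons a R' = R"
    proof (cases R')
      case Nil with Cons True show ?thesis by simp
    next
      case (Cons d R'')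
      with \<open>R = c # R'\<close> True assms have "d \<noteq> iv a"
        by (auto simp: cancel_iff)
      with Cons \<open>R = c # R'\<close> True show ?thesis by (simp add: red_cons_simps)
    qed
    ultimately show ?thesis by simp
  next
    case False
    then have "c \<noteq> iv (iv a)" by simp
    with Cons show ?thesis by (auto simp: red_cons_simps)
  qed
qed

lemma foldr_red_cons_step:
  assumes "reduced R"
  shows "foldr red_cons (red_cons x L) R = red_cons x (foldr red_cons L R)"
proof (cases L)
  case Nil then show ?thesis by simp
next
  case (Cons b L')
  show ?thesis
  proof (cases "b = iv x")
    case True
    have "red_cons x (red_cons (iv x) (foldr red_cons L' R)) = foldr red_cons L' R"
      by (rule rc_cancel) (rule reduced_foldr[OF assms])
    with Cons True show ?thesis by (simp add: red_cons_simps)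
  next
    case False with Cons show ?thesis by (simp add: red_cons_simps)
  qed
qed

lemma foldr_reduce:
  assumes "reduced R" shows "foldr red_cons xs R = foldr red_cons (reduce xs) R"
proof (induction xs)
  case Nil then show ?case by (simp add: reduce_def)
next
  case (Cons x xs)
  have "foldr red_cons (x # xs) R = red_cons x (foldr red_cons (reduce xs) R)"
    using Cons by simp
  also have "\<dots> = foldr red_cons (red_cons x (reduce xs)) R"
    using foldr_red_cons_step[OF assms] by simp
  also have "red_cons x (reduce xs) = reduce (x # xs)" by (simp add: reduce_def)
  finally show ?case .
qed

lemma reduce_Cons: "reduce (x # xs) = red_cons x (reduce xs)"
  by (simp add: reduce_def)

lemma reduce_Nil[simp]: "reduce [] = []"
  by (simp add: reduce_def)

lemma reduce_append: "reduce (xs @ ys) = foldr red_cons xs (reduce ys)"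
  by (simp add: reduce_def)

lemma reduce_idem: "reduced xs \<Longrightarrow> reduce xs = xs"
proof (induction xs rule: reduced.induct)
  case 1 then show ?case by simp
next
  case (2 a) then show ?case by (simp add: reduce_def)
next
  case (3 a b bs)
  then have "reduce (b # bs) = b # bs" by simp
  with 3 show ?case by (simp add: reduce_Cons red_cons_simps cancel_iff)
qed

lemma reduce_reduce[simp]: "reduce (reduce xs) = reduce xs"
  by (simp add: reduce_idem)

lemma reduce_left[simp]: "reduce (reduce xs @ ys) = reduce (xs @ ys)"
  by (simp add: reduce_append foldr_reduce[symmetric])

lemma reduce_right[simp]: "reduce (xs @ reduce ys) = reduce (xs @ ys)"
  by (simp add: reduce_append)

lemma reduce_Cons_reduce[simp]: "reduce (x # reduce ys) = reduce (x # ys)"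
  using reduce_right[of "[x]" ys] by simp

lemma reduce_cancel: "reduce (xs @ a # iv a # ys) = reduce (xs @ ys)"
  using rc_cancel[OF reduced_reduce, of a ys] by (simp add: reduce_append reduce_Cons)

lemma reduce_cancel': "reduce (xs @ iv a # a # ys) = reduce (xs @ ys)"
  using reduce_cancel[of xs "iv a" ys] by simp

lemma inv_w_Nil[simp]: "inv_w [] = []" by (simp add: inv_w_def)
lemma inv_w_Cons[simp]: "inv_w (x # xs) = inv_w xs @ [iv x]"
  by (cases x) (simp add: inv_w_def iv_def)
lemma inv_w_append[simp]: "inv_w (xs @ ys) = inv_w ys @ inv_w xs"
  by (simp add: inv_w_def)
lemma inv_w_inv_w[simp]: "inv_w (inv_w xs) = xs"
  by (induction xs) auto

lemma reduce_inv_cancel: "reduce (xs @ inv_w xs @ ys) = reduce ys"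
proof (induction xs arbitrary: ys)
  case Nil then show ?case by simp
next
  case (Cons x xs)
  have "reduce ((x # xs) @ inv_w (x # xs) @ ys) = reduce ([x] @ (xs @ inv_w xs @ (iv x # ys)))"
    by simp
  also have "\<dots> = reduce ([x] @ reduce (xs @ inv_w xs @ (iv x # ys)))"
    by (rule reduce_right[symmetric])
  also have "\<dots> = reduce ([x] @ (iv x # ys))" using Cons by simp
  also have "\<dots> = reduce ys" using reduce_cancel[of "[]" x ys] by simp
  finally show ?case .
qed

lemma reduce_inv_cancel': "reduce (inv_w xs @ xs @ ys) = reduce ys"
  using reduce_inv_cancel[of "inv_w xs" ys] by simp

lemma reduce_inv_red: "reduce (inv_w (reduce B) @ Y) = reduce (inv_w B @ Y)"
proof (induction B arbitrary: Y)
  case Nil then show ?case by simp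
next
  case (Cons b B)
  note IH = Cons.IH
  show ?case
  proof (cases "reduce B")
    case Nil
    then have "reduce (b # B) = [b]" by (simp add: reduce_Cons)
    then have "reduce (inv_w (reduce (b # B)) @ Y) = reduce (iv b # Y)" by simp
    also have "\<dots> = reduce (inv_w (reduce B) @ iv b # Y)" using Nil by simp
    also have "\<dots> = reduce (inv_w (b # B) @ Y)" using IH by simp
    finally show ?thesis .
  next
    case (Cons c L)
    show ?thesis
    proof (cases "c = iv b")
      case True
      then have r: "reduce (b # B) = L" using Cons by (simp add: reduce_Cons red_cons_simps)
      have "reduce (inv_w (b # B) @ Y) = reduce (inv_w B @ iv b # Y)" by simp
      also have "\<dots> = reduce (inv_w (reduce B) @ iv b # Y)" using IH by simp
      also have "\<dots> = reduce (inv_w L @ b # iv b # Y)" using Cons True by simp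
      also have "\<dots> = reduce (inv_w L @ Y)" by (rule reduce_cancel)
      finally show ?thesis using r by simp
    next
      case False
      then have r: "reduce (b # B) = b # reduce B" using Cons by (simp add: reduce_Cons red_cons_simps)
      have "reduce (inv_w (b # B) @ Y) = reduce (inv_w B @ iv b # Y)" by simp
      also have "\<dots> = reduce (inv_w (reduce B) @ iv b # Y)" using IH by simp
      finally show ?thesis using r by simp
    qed
  qed
qed

lemma set_red_cons: "set (red_cons a L) \<subseteq> insert a (set L)"
  by (cases L) auto

lemma set_reduce: "set (reduce xs) \<subseteq> set xs"
proof (induction xs)
  case Nil then show ?case by simp
next
  case (Cons x xs) then show ?case
    using set_red_cons[of x "reduce xs"] by (auto simp: reduce_Cons)
qed

definition blk :: "('a \<Rightarrow> 'b fword) \<Rightarrow> 'a \<times> bool \<Rightarrow> 'b fword" where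
  "blk f x = (if snd x then f (fst x) else inv_w (f (fst x)))"

definition ecat :: "('a \<Rightarrow> 'b fword) \<Rightarrow> 'a fword \<Rightarrow> 'b fword" where
  "ecat f xs = concat (map (blk f) xs)"

lemma ext_ecat: "ext f xs = reduce (ecat f xs)"
  unfolding ext_def ecat_def blk_def by (rule arg_cong[where f=reduce]) (auto intro!: arg_cong[where f=concat] simp: split_beta)

lemma ecat_Nil[simp]: "ecat f [] = []" by (simp add: ecat_def)
lemma ecat_Cons[simp]: "ecat f (x # xs) = blk f x @ ecat f xs" by (simp add: ecat_def)
lemma ecat_append[simp]: "ecat f (xs @ ys) = ecat f xs @ ecat f ys" by (simp add: ecat_def)
lemma blk_iv[simp]: "blk f (iv x) = inv_w (blk f x)" by (simp add: blk_def)
lemma ecat_inv[simp]: "ecat f (inv_w xs) = inv_w (ecat f xs)"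
  by (induction xs) auto

lemma ext_reduce_gen: "reduce (ecat f (reduce xs) @ Y) = reduce (ecat f xs @ Y)"
proof (induction xs arbitrary: Y)
  case Nil then show ?case by simp
next
  case (Cons x xs)
  note IH = Cons.IH
  show ?case
  proof (cases "reduce xs")
    case Nil
    have "reduce (ecat f (x # xs) @ Y) = reduce (blk f x @ reduce (ecat f xs @ Y))"
      by simp
    also have "\<dots> = reduce (blk f x @ reduce (ecat f (reduce xs) @ Y))" using IH by simp
    finally show ?thesis using Nil by (simp add: reduce_Cons)
  next
    case (Cons c L)
    have "reduce (ecat f (x # xs) @ Y) = reduce (blk f x @ reduce (ecat f xs @ Y))"
      by simp
    also have "\<dots> = reduce (blk f x @ reduce (ecat f (reduce xs) @ Y))" using IH by simp
    also have "\<dots> = reduce (blk f x @ ecat f (reduce xs) @ Y)" by simp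
    finally have *: "reduce (ecat f (x # xs) @ Y) = reduce (blk f x @ ecat f (reduce xs) @ Y)" .
    show ?thesis
    proof (cases "c = iv x")
      case True
      then have "reduce (x # xs) = L" using Cons by (simp add: reduce_Cons)
      moreover have "reduce (blk f x @ ecat f (reduce xs) @ Y) = reduce (ecat f L @ Y)"
        using Cons True reduce_inv_cancel[of "blk f x" "ecat f L @ Y"] by simp
      ultimately show ?thesis using * by simp
    next
      case False
      then have "reduce (x # xs) = x # reduce xs" using Cons by (simp add: reduce_Cons)
      then show ?thesis using * by simp
    qed
  qed
qed

lemma ext_reduce[simp]: "ext f (reduce xs) = ext f xs"
  using ext_reduce_gen[of f xs "[]"] by (simp add: ext_ecat)

lemma ext_append: "ext f (xs @ ys) = reduce (ext f xs @ ext f ys)"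
  by (simp add: ext_ecat)

lemma ext_reduced[simp]: "reduced (ext f xs)"
  by (simp add: ext_ecat)

lemma ext_comp_gen:
  "reduce (ecat g (ecat f xs) @ Y) = reduce (ecat (\<lambda>a. ext g (f a)) xs @ Y)"
proof (induction xs arbitrary: Y)
  case Nil then show ?case by simp
next
  case (Cons x xs)
  obtain a e where x: "x = (a, e)" by (cases x)
  show ?case
  proof (cases e)
    case True
    have "reduce (ecat g (ecat f (x # xs)) @ Y) = reduce (ecat g (f a) @ reduce (ecat g (ecat f xs) @ Y))"
      using x True by (simp add: blk_def)
    also have "\<dots> = reduce (ecat g (f a) @ reduce (ecat (\<lambda>a. ext g (f a)) xs @ Y))"
      using Cons by simp
    also have "\<dots> = reduce (reduce (ecat g (f a)) @ (ecat (\<lambda>a. ext g (f a)) xs @ Y))"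
      by simp
    finally show ?thesis using x True by (simp add: blk_def ext_ecat)
  next
    case False
    have "reduce (ecat g (ecat f (x # xs)) @ Y) = reduce (inv_w (ecat g (f a)) @ reduce (ecat g (ecat f xs) @ Y))"
      using x False by (simp add: blk_def)
    also have "\<dots> = reduce (inv_w (ecat g (f a)) @ reduce (ecat (\<lambda>a. ext g (f a)) xs @ Y))"
      using Cons by simp
    also have "\<dots> = reduce (inv_w (reduce (ecat g (f a))) @ (ecat (\<lambda>a. ext g (f a)) xs @ Y))"
      by (simp add: reduce_inv_red)
    finally show ?thesis using x False by (simp add: blk_def ext_ecat)
  qed
qed

lemma ext_comp: "ext g (ext f xs) = ext (\<lambda>a. ext g (f a)) xs"
proof -
  have "ext g (ext f xs) = ext g (ecat f xs)" by (simp add: ext_ecat[of f])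
  also have "\<dots> = reduce (ecat g (ecat f xs) @ [])" by (simp add: ext_ecat)
  also have "\<dots> = ext (\<lambda>a. ext g (f a)) xs" by (simp only: ext_comp_gen) (simp add: ext_ecat)
  finally show ?thesis .
qed

lemma ext_single: "ext f [(a, True)] = reduce (f a)"
  by (simp add: ext_ecat blk_def)

lemma ecat_single: "ecat (\<lambda>c. [(c, True)]) xs = xs"
  by (induction xs) (auto simp: blk_def iv_def)

lemma ext_single_id: "ext (\<lambda>c. [(c, True)]) xs = reduce xs"
  by (simp add: ext_ecat ecat_single)

lemma ext_img_reduce: "ext (\<lambda>c. reduce (F c)) h = ext F h"
proof -
  have "ext (\<lambda>c. [(c, True)]) (ext F h) = ext (\<lambda>a. ext (\<lambda>c. [(c, True)]) (F a)) h"
    by (rule ext_comp)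
  then show ?thesis by (simp add: ext_single_id reduce_idem)
qed

lemma ext_cong: "(\<And>a. a \<in> fst ` set xs \<Longrightarrow> f a = g a) \<Longrightarrow> ext f xs = ext g xs"
  unfolding ext_ecat ecat_def blk_def by (rule arg_cong[where f=reduce]) (auto intro!: arg_cong[where f=concat])


lemma reduced_single[simp]: "reduced [a]" by simp

lemma group_free_grp: "group (free_grp S)"
proof (rule groupI)
  fix x y assume "x \<in> carrier (free_grp S)" "y \<in> carrier (free_grp S)"
  then show "x \<otimes>\<^bsub>free_grp S\<^esub> y \<in> carrier (free_grp S)"
    using set_reduce[of "x @ y"] by (force simp: free_grp_def)
next
  show "\<one>\<^bsub>free_grp S\<^esub> \<in> carrier (free_grp S)" by (simp add: free_grp_def)
next
  fix x y z
  show "x \<otimes>\<^bsub>free_grp S\<^esub> y \<otimes>\<^bsub>free_grp S\<^esub> z = x \<otimes>\<^bsub>free_grp S\<^esub> (y \<otimes>\<^bsub>free_grp S\<^esub> z)"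
    by (simp add: free_grp_def)
next
  fix x assume "x \<in> carrier (free_grp S)"
  then show "\<one>\<^bsub>free_grp S\<^esub> \<otimes>\<^bsub>free_grp S\<^esub> x = x"
    by (simp add: free_grp_def reduce_idem)
next
  fix x assume x: "x \<in> carrier (free_grp S)"
  have "reduce (inv_w x) \<in> carrier (free_grp S)"
  proof -
    have "fst ` set (inv_w x) \<subseteq> S" using x by (force simp: free_grp_def inv_w_def)
    then show ?thesis using set_reduce[of "inv_w x"] by (force simp: free_grp_def)
  qed
  moreover have "reduce (reduce (inv_w x) @ x) = []"
    using reduce_inv_cancel'[of x "[]"] by simp
  ultimately show "\<exists>y\<in>carrier (free_grp S). y \<otimes>\<^bsub>free_grp S\<^esub> x = \<one>\<^bsub>free_grp S\<^esub>"
    by (intro bexI[of _ "reduce (inv_w x)"]) (simp_all add: free_grp_def)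
qed

lemma group_F2: "group F2" unfolding F2_def by (rule group_free_grp)

lemma fvb_eq_ctx: "fvb_eq n u v \<Longrightarrow> fvb_eq n (x @ u @ y) (x @ v @ y)"
proof (induction rule: fvb_eq.induct)
  case (refl u) then show ?case by (rule fvb_eq.refl)
next
  case (sym u v) then show ?case by (blast intro: fvb_eq.sym)
next
  case (trans u v w) then show ?case by (blast intro: fvb_eq.trans)
next
  case (rel l r u v)
  have "fvb_eq n ((x @ u) @ l @ (v @ y)) ((x @ u) @ r @ (v @ y))"
    by (rule fvb_eq.rel[OF rel])
  then show ?case by simp
qed

lemma fvb_eq_app: "fvb_eq n u u' \<Longrightarrow> fvb_eq n v v' \<Longrightarrow> fvb_eq n (u @ v) (u' @ v')"
  using fvb_eq_ctx[of n u u' "[]" v] fvb_eq_ctx[of n v v' u' "[]"]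
  by (auto intro: fvb_eq.trans)

lemma fvb_class_eq_iff: "fvb_class n u = fvb_class n v \<longleftrightarrow> fvb_eq n u v"
proof
  assume "fvb_class n u = fvb_class n v"
  then have "v \<in> fvb_class n u" by (auto simp: fvb_class_def intro: fvb_eq.refl)
  then show "fvb_eq n u v" by (simp add: fvb_class_def)
next
  assume "fvb_eq n u v"
  then show "fvb_class n u = fvb_class n v"
    by (auto simp: fvb_class_def intro: fvb_eq.trans fvb_eq.sym)
qed

lemma fvb_mult_class:
  "fvb_class n u \<otimes>\<^bsub>FVB n\<^esub> fvb_class n v = fvb_class n (u @ v)"
  apply (auto simp: FVB_def fvb_class_def)
   apply (meson fvb_eq.sym fvb_eq.trans fvb_eq_app)
  by (meson fvb_eq.refl)

lemma fvb_one: "\<one>\<^bsub>FVB n\<^esub> = fvb_class n []" by (simp add: FVB_def)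

lemma fvb_carrier: "carrier (FVB n) = {fvb_class n u | u. set u \<subseteq> fvb_gens n}"
  by (simp add: FVB_def)

lemma fvb_gg:
  assumes "g \<in> fvb_gens n"
  shows "fvb_eq n (x @ [g, g] @ y) (x @ y)"
proof -
  obtain b i where g: "g = (b, i)" and i: "1 \<le> i" "i \<le> n - 1"
    using assms by (cases g) (auto simp: fvb_gens_def)
  have "([g, g], []) \<in> fvb_rels n"
    using g i by (cases b) (auto simp: fvb_rels_def sg_def rh_def)
  from fvb_eq.rel[OF this, of x y] show ?thesis by simp
qed

lemma fvb_rev_cancel:
  "set u \<subseteq> fvb_gens n \<Longrightarrow> fvb_eq n (x @ rev u @ u @ y) (x @ y)"
proof (induction u arbitrary: x y)
  case Nil then show ?case by (simp add: fvb_eq.refl)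
next
  case (Cons g u)
  have "fvb_eq n ((x @ rev u) @ [g, g] @ (u @ y)) ((x @ rev u) @ (u @ y))"
    using Cons.prems by (intro fvb_gg) auto
  moreover have "fvb_eq n (x @ rev u @ u @ y) (x @ y)"
    using Cons by auto
  ultimately show ?case by (auto intro: fvb_eq.trans)
qed

lemma fvb_rev_cancel':
  "set u \<subseteq> fvb_gens n \<Longrightarrow> fvb_eq n (x @ u @ rev u @ y) (x @ y)"
  using fvb_rev_cancel[of "rev u" n x y] by simp

lemma group_FVB: "group (FVB n)"
proof (rule groupI)
  fix x y assume "x \<in> carrier (FVB n)" "y \<in> carrier (FVB n)"
  then obtain u v where "x = fvb_class n u" "set u \<subseteq> fvb_gens n"
    "y = fvb_class n v" "set v \<subseteq> fvb_gens n" by (auto simp: fvb_carrier)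
  then show "x \<otimes>\<^bsub>FVB n\<^esub> y \<in> carrier (FVB n)"
    by (auto simp: fvb_mult_class fvb_carrier intro!: exI[of _ "u @ v"])
next
  show "\<one>\<^bsub>FVB n\<^esub> \<in> carrier (FVB n)" by (auto simp: fvb_one fvb_carrier)
next
  fix x y z assume "x \<in> carrier (FVB n)" "y \<in> carrier (FVB n)" "z \<in> carrier (FVB n)"
  then show "x \<otimes>\<^bsub>FVB n\<^esub> y \<otimes>\<^bsub>FVB n\<^esub> z = x \<otimes>\<^bsub>FVB n\<^esub> (y \<otimes>\<^bsub>FVB n\<^esub> z)"
    by (auto simp: fvb_carrier fvb_mult_class)
next
  fix x assume "x \<in> carrier (FVB n)"
  then show "\<one>\<^bsub>FVB n\<^esub> \<otimes>\<^bsub>FVB n\<^esub> x = x"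
    by (auto simp: fvb_carrier fvb_mult_class fvb_one)
next
  fix x assume "x \<in> carrier (FVB n)"
  then obtain u where u: "x = fvb_class n u" "set u \<subseteq> fvb_gens n" by (auto simp: fvb_carrier)
  have "fvb_class n (rev u) \<in> carrier (FVB n)" using u by (force simp: fvb_carrier)
  moreover have "fvb_class n (rev u) \<otimes>\<^bsub>FVB n\<^esub> x = \<one>\<^bsub>FVB n\<^esub>"
    using u fvb_rev_cancel[of u n "[]" "[]"]
    by (simp add: fvb_mult_class fvb_one fvb_class_eq_iff)
  ultimately show "\<exists>y\<in>carrier (FVB n). y \<otimes>\<^bsub>FVB n\<^esub> x = \<one>\<^bsub>FVB n\<^esub>" by blast
qed


lemma iv_pair[simp]: "iv (a, b) = (a, \<not> b)" by (simp add: iv_def)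

datatype ug = UX nat | UY nat | UZ nat nat

definition tau :: "nat \<Rightarrow> nat \<Rightarrow> nat" where
  "tau i k = (if k = i then i + 1 else if k = i + 1 then i else k)"

fun Usig :: "nat \<Rightarrow> ug \<Rightarrow> ug fword" where
  "Usig i (UX k) = (if k = i then [(UX (i+1), True), (UZ i (i+1), True)]
                    else if k = i + 1 then [(UX i, True), (UZ i (i+1), False)]
                    else [(UX k, True)])"
| "Usig i g = [(g, True)]"

fun Urho :: "nat \<Rightarrow> ug \<Rightarrow> ug fword" where
  "Urho i (UX k) = [(UX (tau i k), True)]"
| "Urho i (UY k) = [(UY (tau i k), True)]"
| "Urho i (UZ a b) = [(UZ (tau i a) (tau i b), True)]"

definition Ugen :: "bool \<times> nat \<Rightarrow> ug fword \<Rightarrow> ug fword" where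
  "Ugen g = (if fst g then ext (Urho (snd g)) else ext (Usig (snd g)))"

fun Uw :: "(bool \<times> nat) list \<Rightarrow> ug fword \<Rightarrow> ug fword" where
  "Uw [] = id"
| "Uw (g # gs) = Uw gs \<circ> Ugen g"

lemma Uw_append: "Uw (u @ v) h = Uw v (Uw u h)"
  by (induction u arbitrary: h) auto

lemma ext_Nil[simp]: "ext f [] = []" by (simp add: ext_ecat)

lemma Uw_ext: "u \<noteq> [] \<Longrightarrow> Uw u h = ext (\<lambda>c. Uw u [(c, True)]) h"
proof (induction u arbitrary: h)
  case Nil then show ?case by simp
next
  case (Cons g gs)
  define M where "M = (if fst g then Urho (snd g) else Usig (snd g))"
  have UG: "Ugen g = ext M" by (simp add: Ugen_def M_def)
  show ?case
  proof (cases "gs = []")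
    case True
    then show ?thesis by (simp add: UG ext_single ext_img_reduce)
  next
    case False
    have "Uw (g # gs) h = ext (\<lambda>c. Uw gs [(c, True)]) (ext M h)"
      using Cons.IH[OF False, of "ext M h"] by (simp add: UG)
    also have "\<dots> = ext (\<lambda>c. ext (\<lambda>c. Uw gs [(c, True)]) (M c)) h" by (rule ext_comp)
    also have "\<dots> = ext (\<lambda>c. Uw (g # gs) [(c, True)]) h"
    proof -
      have "Uw (g # gs) [(c, True)] = ext (\<lambda>c. Uw gs [(c, True)]) (M c)" for c
        using Cons.IH[OF False, of "reduce (M c)"] by (simp add: UG ext_single)
      then show ?thesis by simp
    qed
    finally show ?thesis .
  qed
qed

lemma Uw_eqI:
  assumes "l \<noteq> []" "r \<noteq> []" "\<And>c. Uw l [(c, True)] = Uw r [(c, True)]"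
  shows "Uw l h = Uw r h"
proof -
  have "Uw l h = ext (\<lambda>c. Uw l [(c, True)]) h" by (rule Uw_ext[OF assms(1)])
  also have "\<dots> = ext (\<lambda>c. Uw r [(c, True)]) h" using assms(3) by simp
  also have "\<dots> = Uw r h" by (rule Uw_ext[OF assms(2), symmetric])
  finally show ?thesis .
qed

lemma Uw_idI:
  assumes "l \<noteq> []" "\<And>c. Uw l [(c, True)] = [(c, True)]" "reduced h"
  shows "Uw l h = h"
proof -
  have "Uw l h = ext (\<lambda>c. Uw l [(c, True)]) h" by (rule Uw_ext[OF assms(1)])
  also have "\<dots> = ext (\<lambda>c. [(c, True)]) h" using assms(2) by simp
  finally show ?thesis using assms(3) by (simp add: ext_single_id reduce_idem)
qed

lemma tau_simps[simp]: "tau i i = i + 1" "tau i (i+1) = i" "k \<noteq> i \<Longrightarrow> k \<noteq> i + 1 \<Longrightarrow> tau i k = k"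
  by (auto simp: tau_def)

lemma ext_Cons: "ext f (x # xs) = reduce (blk f x @ ext f xs)"
  using ext_append[of f "[x]" xs] by (simp add: ext_ecat)

lemma blk_simps[simp]: "blk f (c, True) = f c" "blk f (c, False) = inv_w (f c)"
  by (simp_all add: blk_def)

lemma tau_tau[simp]: "tau i (tau i k) = k" by (simp add: tau_def)
lemma tau_braid: "tau i (tau (i+1) (tau i k)) = tau (i+1) (tau i (tau (i+1) k))" by (simp add: tau_def)
lemma tau_comm: "i + 2 \<le> j \<or> j + 2 \<le> i \<Longrightarrow> tau i (tau j k) = tau j (tau i k)" by (auto simp: tau_def)

lemmas Ucomp = Ugen_def ext_Cons reduce_Cons



lemma tau_braid': "tau i (tau (Suc i) (tau i k)) = tau (Suc i) (tau i (tau (Suc i) k))" by (simp add: tau_def)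

lemma UR1: "reduced h \<Longrightarrow> Uw [(False,i),(False,i)] h = h"
proof (rule Uw_idI)
  fix c show "Uw [(False,i),(False,i)] [(c, True)] = [(c, True)]"
  proof (cases c)
    case (UX k)
    consider "k = i" | "k = i + 1" | "k \<noteq> i \<and> k \<noteq> i + 1" by blast
    then show ?thesis using UX by cases (simp_all add: Ucomp)
  qed (simp_all add: Ucomp)
qed auto

lemma UR2: "reduced h \<Longrightarrow> Uw [(True,i),(True,i)] h = h"
proof (rule Uw_idI)
  fix c show "Uw [(True,i),(True,i)] [(c, True)] = [(c, True)]"
    by (cases c) (simp_all add: Ucomp)
qed auto

lemma UR3: "Uw [(False,i),(False,i+1),(False,i)] h = Uw [(False,i+1),(False,i),(False,i+1)] h"
proof (rule Uw_eqI)
  fix c show "Uw [(False,i),(False,i+1),(False,i)] [(c, True)] = Uw [(False,i+1),(False,i),(False,i+1)] [(c, True)]"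
    by (cases c) (simp_all add: Ucomp)
qed auto

lemma UR4: "Uw [(True,i),(True,i+1),(True,i)] h = Uw [(True,i+1),(True,i),(True,i+1)] h"
proof (rule Uw_eqI)
  fix c show "Uw [(True,i),(True,i+1),(True,i)] [(c, True)] = Uw [(True,i+1),(True,i),(True,i+1)] [(c, True)]"
    by (cases c) (simp_all add: Ucomp tau_braid')
qed auto

lemma UR5: "Uw [(True,i),(True,i+1),(False,i)] h = Uw [(False,i+1),(True,i),(True,i+1)] h"
proof (rule Uw_eqI)
  fix c show "Uw [(True,i),(True,i+1),(False,i)] [(c, True)] = Uw [(False,i+1),(True,i),(True,i+1)] [(c, True)]"
  proof (cases c)
    case (UX k)
    consider "k = i" | "k = i + 1" | "k = i + 2" | "k \<noteq> i \<and> k \<noteq> i + 1 \<and> k \<noteq> i + 2" by blast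
    then show ?thesis using UX by cases (simp_all add: Ucomp tau_def)
  qed (simp_all add: Ucomp)
qed auto

lemma UR6: "i + 2 \<le> j \<or> j + 2 \<le> i \<Longrightarrow> Uw [(False,i),(False,j)] h = Uw [(False,j),(False,i)] h"
proof (rule Uw_eqI)
  assume a: "i + 2 \<le> j \<or> j + 2 \<le> i"
  fix c show "Uw [(False,i),(False,j)] [(c, True)] = Uw [(False,j),(False,i)] [(c, True)]"
  proof (cases c)
    case (UX k)
    consider "k = i" | "k = i + 1" | "k = j" | "k = j + 1" | "k \<noteq> i \<and> k \<noteq> i + 1 \<and> k \<noteq> j \<and> k \<noteq> j + 1" by blast
    then show ?thesis using UX a by cases (auto simp: Ucomp)
  qed (simp_all add: Ucomp)
qed auto

lemma UR7: "i + 2 \<le> j \<or> j + 2 \<le> i \<Longrightarrow> Uw [(True,i),(True,j)] h = Uw [(True,j),(True,i)] h"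
proof (rule Uw_eqI)
  assume a: "i + 2 \<le> j \<or> j + 2 \<le> i"
  fix c show "Uw [(True,i),(True,j)] [(c, True)] = Uw [(True,j),(True,i)] [(c, True)]"
    using a by (cases c) (simp_all add: Ucomp tau_comm[OF a])
qed auto

lemma UR8: "i + 2 \<le> j \<or> j + 2 \<le> i \<Longrightarrow> Uw [(True,i),(False,j)] h = Uw [(False,j),(True,i)] h"
proof (rule Uw_eqI)
  assume a: "i + 2 \<le> j \<or> j + 2 \<le> i"
  fix c show "Uw [(True,i),(False,j)] [(c, True)] = Uw [(False,j),(True,i)] [(c, True)]"
  proof (cases c)
    case (UX k)
    consider "k = i" | "k = i + 1" | "k = j" | "k = j + 1" | "k \<noteq> i \<and> k \<noteq> i + 1 \<and> k \<noteq> j \<and> k \<noteq> j + 1" by blast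
    then show ?thesis using UX a by cases (auto simp: Ucomp tau_def)
  qed (simp_all add: Ucomp)
qed auto


definition Sm :: "bool fword \<Rightarrow> ug \<Rightarrow> (bool \<times> nat) fword" where
  "Sm w c = (case c of UX k \<Rightarrow> [((False,k),True)] | UY k \<Rightarrow> [((True,k),True)]
              | UZ a b \<Rightarrow> ext (\<lambda>d. [((True, if d then b else a), True)]) w)"

lemma Sm_simps[simp]: "Sm w (UX k) = [((False,k),True)]" "Sm w (UY k) = [((True,k),True)]"
  "Sm w (UZ a b) = ext (\<lambda>d. [((True, if d then b else a), True)]) w"
  by (simp_all add: Sm_def)

lemma reduce_single[simp]: "reduce [a] = [a]" by (simp add: reduce_def)

lemma wsub_Suc: "ext (\<lambda>b. [((True, if b then i + 1 else i), True)]) w = ext (\<lambda>d. [((True, if d then Suc i else i), True)]) w"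
  by (rule ext_cong) simp

lemma tau_Suc[simp]: "tau i (Suc i) = i" by (simp add: tau_def)

lemma sig_pt: "ext (sig_img w i) (Sm w c) = ext (Sm w) (Usig i c)"
proof (cases c)
  case (UX k)
  consider "k = i" | "k = i + 1" | "k \<noteq> i \<and> k \<noteq> i + 1" by blast
  then show ?thesis using UX
    by cases (simp_all add: ext_single sig_img_def w_sub_def wsub_Suc, simp_all add: ext_ecat)
next
  case (UY k) then show ?thesis by (simp add: ext_single sig_img_def)
next
  case (UZ a b)
  have "ext (sig_img w i) (Sm w c) = ext (\<lambda>d. ext (sig_img w i) [((True, if d then b else a), True)]) w"
    using UZ by (simp add: ext_comp)
  also have "\<dots> = ext (\<lambda>d. [((True, if d then b else a), True)]) w"
    by (simp add: ext_single sig_img_def)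
  finally show ?thesis using UZ by (simp add: ext_single reduce_idem)
qed

lemma rho_pt: "ext (rho_img i) (Sm w c) = ext (Sm w) (Urho i c)"
proof (cases c)
  case (UX k)
  consider "k = i" | "k = i + 1" | "k \<noteq> i \<and> k \<noteq> i + 1" by blast
  then show ?thesis using UX
    by cases (simp_all add: ext_single rho_img_def)
next
  case (UY k)
  consider "k = i" | "k = i + 1" | "k \<noteq> i \<and> k \<noteq> i + 1" by blast
  then show ?thesis using UY
    by cases (simp_all add: ext_single rho_img_def)
next
  case (UZ a b)
  have "ext (rho_img i) (Sm w c) = ext (\<lambda>d. ext (rho_img i) [((True, if d then b else a), True)]) w"
    using UZ by (simp add: ext_comp)
  also have "\<dots> = ext (\<lambda>d. [((True, if d then tau i b else tau i a), True)]) w"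
    by (rule ext_cong) (auto simp: ext_single rho_img_def tau_def)
  finally show ?thesis using UZ by (simp add: ext_single reduce_idem)
qed

lemma theta_fact: "theta_gen w g (ext (Sm w) h) = ext (Sm w) (Ugen g h)"
proof (cases "fst g")
  case True
  have "theta_gen w g (ext (Sm w) h) = ext (\<lambda>c. ext (rho_img (snd g)) (Sm w c)) h"
    using True by (simp add: theta_gen_def ext_comp)
  also have "\<dots> = ext (\<lambda>c. ext (Sm w) (Urho (snd g) c)) h" by (simp add: rho_pt)
  also have "\<dots> = ext (Sm w) (Ugen g h)" using True by (simp add: Ugen_def ext_comp)
  finally show ?thesis .
next
  case False
  have "theta_gen w g (ext (Sm w) h) = ext (\<lambda>c. ext (sig_img w (snd g)) (Sm w c)) h"
    using False by (simp add: theta_gen_def ext_comp)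
  also have "\<dots> = ext (\<lambda>c. ext (Sm w) (Usig (snd g) c)) h" by (simp add: sig_pt)
  also have "\<dots> = ext (Sm w) (Ugen g h)" using False by (simp add: Ugen_def ext_comp)
  finally show ?thesis .
qed

lemma theta_word_fact: "theta_word w u (ext (Sm w) h) = ext (Sm w) (Uw u h)"
  by (induction u arbitrary: h) (simp_all add: theta_fact)

definition liftl :: "(bool \<times> nat) \<times> bool \<Rightarrow> ug \<times> bool" where
  "liftl x = ((if fst (fst x) then UY (snd (fst x)) else UX (snd (fst x))), snd x)"

lemma ext_Sm_lift: "ext (Sm w) (map liftl f) = reduce f"
proof -
  have "ecat (Sm w) (map liftl f) = f"
    by (induction f) (auto simp: liftl_def blk_def)
  then show ?thesis by (simp add: ext_ecat)
qed

lemma reduced_lift: "reduced f \<Longrightarrow> reduced (map liftl f)"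
proof (induction f rule: reduced.induct)
  case (3 a b bs)
  then show ?case by (cases a; cases b) (auto simp: liftl_def split: if_splits)
qed auto


definition aw :: "(bool \<times> nat) list" where
  "aw = concat (replicate 3 [(False,1),(True,2),(False,1),(True,2)])"
definition bw :: "(bool \<times> nat) list" where
  "bw = concat (replicate 3 [(False,1),(True,1),(True,2),(True,1),(False,1),(True,1),(True,2),(True,1)])"

lemma aw_ker: "reduced h \<Longrightarrow> Uw aw h = h"
proof (rule Uw_idI)
  fix c show "Uw aw [(c, True)] = [(c, True)]"
  proof (cases c)
    case (UX k)
    consider "k = 1" | "k = 2" | "k = 3" | "k \<noteq> 1 \<and> k \<noteq> 2 \<and> k \<noteq> 3" by blast
    then show ?thesis using UX by cases (simp_all add: aw_def numeral_eq_Suc Ucomp tau_def)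
  next
    case (UY k)
    consider "k = 1" | "k = 2" | "k = 3" | "k \<noteq> 1 \<and> k \<noteq> 2 \<and> k \<noteq> 3" by blast
    then show ?thesis using UY by cases (simp_all add: aw_def numeral_eq_Suc Ucomp tau_def)
  next
    case (UZ a b)
    then show ?thesis by (simp add: aw_def numeral_eq_Suc Ucomp)
  qed
qed (simp add: aw_def)

lemma bw_ker: "reduced h \<Longrightarrow> Uw bw h = h"
proof (rule Uw_idI)
  fix c show "Uw bw [(c, True)] = [(c, True)]"
  proof (cases c)
    case (UX k)
    consider "k = 1" | "k = 2" | "k = 3" | "k \<noteq> 1 \<and> k \<noteq> 2 \<and> k \<noteq> 3" by blast
    then show ?thesis using UX by cases (simp_all add: bw_def numeral_eq_Suc Ucomp tau_def)
  next
    case (UY k)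
    consider "k = 1" | "k = 2" | "k = 3" | "k \<noteq> 1 \<and> k \<noteq> 2 \<and> k \<noteq> 3" by blast
    then show ?thesis using UY by cases (simp_all add: bw_def numeral_eq_Suc Ucomp tau_def)
  next
    case (UZ a b)
    then show ?thesis by (simp add: bw_def numeral_eq_Suc Ucomp)
  qed
qed (simp add: bw_def)


definition cf :: "nat \<times> nat \<Rightarrow> nat \<times> nat \<Rightarrow> int" where
  "cf p q = (if p = q then 2
     else if fst p \<noteq> fst q \<and> fst p \<noteq> snd q \<and> snd p \<noteq> fst q \<and> snd p \<noteq> snd q then 0
     else if (snd p = fst q \<and> fst p \<noteq> snd q) \<or> (snd q = fst p \<and> snd p \<noteq> fst q) then -1
     else -2)"

definition Pn :: "nat \<Rightarrow> (nat \<times> nat) set" where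
  "Pn n = {p \<in> {1..n} \<times> {1..n}. fst p \<noteq> snd p}"

lemma finite_Pn[simp]: "finite (Pn n)" by (simp add: Pn_def)

definition Lf :: "nat \<Rightarrow> nat \<times> nat \<Rightarrow> (nat \<times> nat \<Rightarrow> int) \<Rightarrow> int" where
  "Lf n p f = (\<Sum>r\<in>Pn n. cf p r * f r)"

definition rfl :: "nat \<Rightarrow> nat \<times> nat \<Rightarrow> (nat \<times> nat \<Rightarrow> int) \<Rightarrow> (nat \<times> nat \<Rightarrow> int)" where
  "rfl n p f = f(p := f p - Lf n p f)"

definition Tt :: "nat \<Rightarrow> nat \<times> nat \<Rightarrow> nat \<times> nat" where
  "Tt i q = (tau i (fst q), tau i (snd q))"

definition Dgen :: "nat \<Rightarrow> bool \<times> nat \<Rightarrow> (nat \<times> nat \<Rightarrow> int) \<Rightarrow> (nat \<times> nat \<Rightarrow> int)" where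
  "Dgen n g = (if fst g then (\<lambda>f. f \<circ> Tt (snd g)) else rfl n (snd g, snd g + 1))"

fun Dw :: "nat \<Rightarrow> (bool \<times> nat) list \<Rightarrow> (nat \<times> nat \<Rightarrow> int) \<Rightarrow> (nat \<times> nat \<Rightarrow> int)" where
  "Dw n [] = id"
| "Dw n (g # gs) = Dw n gs \<circ> Dgen n g"

lemma Dw_append: "Dw n (u @ v) f = Dw n v (Dw n u f)"
  by (induction u arbitrary: f) auto

lemma cf_sym: "cf p q = cf q p"
  by (auto simp: cf_def)

lemma cf_self[simp]: "cf p p = 2" by (simp add: cf_def)

lemma Lf_upd: "q \<in> Pn n \<Longrightarrow> Lf n p (f(q := x)) = Lf n p f + cf p q * (x - f q)"
proof -
  assume q: "q \<in> Pn n"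
  have "Lf n p (f(q := x)) = cf p q * x + (\<Sum>r\<in>Pn n - {q}. cf p r * f r)"
    unfolding Lf_def using q by (simp add: sum.remove[of "Pn n" q])
  moreover have "Lf n p f = cf p q * f q + (\<Sum>r\<in>Pn n - {q}. cf p r * f r)"
    unfolding Lf_def using q by (simp add: sum.remove[of "Pn n" q])
  ultimately show ?thesis by (simp add: algebra_simps)
qed

lemma rfl_rfl: "p \<in> Pn n \<Longrightarrow> rfl n p (rfl n p f) = f"
  by (simp add: rfl_def Lf_upd)

lemma rfl_braid:
  assumes "p \<in> Pn n" "q \<in> Pn n" "p \<noteq> q" "cf p q = -1"
  shows "rfl n p (rfl n q (rfl n p f)) = rfl n q (rfl n p (rfl n q f))"
proof -
  have c: "cf q p = -1" using assms(4) cf_sym by metis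
  show ?thesis using assms c
    by (simp add: rfl_def Lf_upd fun_eq_iff algebra_simps)
qed

lemma rfl_comm:
  assumes "p \<in> Pn n" "q \<in> Pn n" "p \<noteq> q" "cf p q = 0"
  shows "rfl n p (rfl n q f) = rfl n q (rfl n p f)"
proof -
  have c: "cf q p = 0" using assms(4) cf_sym by metis
  show ?thesis using assms c
    by (simp add: rfl_def Lf_upd fun_eq_iff algebra_simps)
qed

lemma rfl_equiv:
  assumes inj: "inj T" and img: "T ` Pn n = Pn n" and inv: "\<And>p r. cf (T p) (T r) = cf p r"
  shows "rfl n p (f \<circ> T) = rfl n (T p) f \<circ> T"
proof -
  have "Lf n p (f \<circ> T) = (\<Sum>r\<in>Pn n. cf (T p) (T r) * f (T r))"
    by (simp add: Lf_def inv)
  also have "\<dots> = (\<Sum>s\<in>T ` Pn n. cf (T p) s * f s)"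
    using inj by (simp add: sum.reindex inj_on_subset[OF inj])
  also have "\<dots> = Lf n (T p) f" by (simp add: img Lf_def)
  finally have L: "Lf n p (f \<circ> T) = Lf n (T p) f" .
  show ?thesis
    using inj by (auto simp: rfl_def L fun_eq_iff inj_eq)
qed

lemma tau_inj: "tau i x = tau i y \<longleftrightarrow> x = y"
  by (auto simp: tau_def)

lemma inj_Tt: "inj (Tt i)"
  by (auto simp: inj_def Tt_def tau_inj)

lemma cf_Tt: "cf (Tt i p) (Tt i r) = cf p r"
  by (simp add: cf_def Tt_def tau_inj prod_eq_iff)

lemma Tt_Tt[simp]: "Tt i (Tt i q) = q" by (simp add: Tt_def)

lemma tau_range: "1 \<le> i \<Longrightarrow> i + 1 \<le> n \<Longrightarrow> k \<in> {1..n} \<Longrightarrow> tau i k \<in> {1..n}"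
  by (auto simp: tau_def)

lemma Tt_Pn: assumes "1 \<le> i" "i + 1 \<le> n" shows "Tt i ` Pn n = Pn n"
proof -
  have sub: "Tt i ` Pn n \<subseteq> Pn n"
    using tau_range[OF assms] by (auto simp: Pn_def Tt_def tau_inj)
  have "Pn n \<subseteq> Tt i ` Pn n"
  proof
    fix q assume "q \<in> Pn n"
    then have "Tt i q \<in> Pn n" using sub by auto
    then show "q \<in> Tt i ` Pn n" by (metis Tt_Tt image_eqI)
  qed
  then show ?thesis using sub by auto
qed

lemma DR1: "1 \<le> i \<Longrightarrow> i \<le> n - 1 \<Longrightarrow> Dw n [sg i, sg i] = Dw n []"
proof -
  assume a: "1 \<le> i" "i \<le> n - 1"
  then have "(i, i+1) \<in> Pn n" by (auto simp: Pn_def)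
  then show ?thesis by (auto simp: sg_def fun_eq_iff Dgen_def rfl_rfl)
qed

lemma DR2: "Dw n [rh i, rh i] = Dw n []"
  by (auto simp: rh_def fun_eq_iff Dgen_def)

lemma DR3: "1 \<le> i \<Longrightarrow> i \<le> n - 2 \<Longrightarrow> Dw n [sg i, sg (Suc i), sg i] = Dw n [sg (Suc i), sg i, sg (Suc i)]"
proof -
  assume a: "1 \<le> i" "i \<le> n - 2"
  have "rfl n (i, i+1) (rfl n (i+1, i+2) (rfl n (i, i+1) f)) = rfl n (i+1, i+2) (rfl n (i, i+1) (rfl n (i+1, i+2) f))" for f
    using a by (intro rfl_braid) (auto simp: Pn_def cf_def)
  then show ?thesis by (auto simp: sg_def fun_eq_iff Dgen_def)
qed

lemma DR4: "Dw n [rh i, rh (Suc i), rh i] = Dw n [rh (Suc i), rh i, rh (Suc i)]"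
  by (auto simp: rh_def fun_eq_iff Dgen_def Tt_def tau_braid')

lemma DR5: "1 \<le> i \<Longrightarrow> i \<le> n - 2 \<Longrightarrow> Dw n [rh i, rh (Suc i), sg i] = Dw n [sg (Suc i), rh i, rh (Suc i)]"
proof -
  assume a: "1 \<le> i" "i \<le> n - 2"
  have H: "rfl n (i, Suc i) (f \<circ> Tt i \<circ> Tt (Suc i)) = rfl n (Suc i, Suc (Suc i)) f \<circ> Tt i \<circ> Tt (Suc i)" for f
  proof -
    have injT: "inj (Tt i \<circ> Tt (Suc i))" by (intro inj_compose inj_Tt)
    have "(Tt i \<circ> Tt (Suc i)) ` Pn n = Tt i ` (Tt (i+1) ` Pn n)" by (simp add: image_comp)
    also have "Tt (i+1) ` Pn n = Pn n" using a by (intro Tt_Pn) auto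
    also have "Tt i ` Pn n = Pn n" using a by (intro Tt_Pn) auto
    finally have imgT: "(Tt i \<circ> Tt (Suc i)) ` Pn n = Pn n" .
    have cfT: "cf ((Tt i \<circ> Tt (Suc i)) p) ((Tt i \<circ> Tt (Suc i)) r) = cf p r" for p r by (simp add: cf_Tt)
    have Tp: "(Tt i \<circ> Tt (Suc i)) (i, Suc i) = (Suc i, Suc (Suc i))" by (simp add: Tt_def tau_def)
    have "rfl n (i, Suc i) (f \<circ> (Tt i \<circ> Tt (Suc i))) = rfl n ((Tt i \<circ> Tt (Suc i)) (i, Suc i)) f \<circ> (Tt i \<circ> Tt (Suc i))"
      by (rule rfl_equiv[OF injT imgT cfT])
    then show ?thesis unfolding Tp comp_assoc .
  qed
  show ?thesis by (intro ext) (simp add: sg_def rh_def Dgen_def H)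
qed

lemma DR6: "1 \<le> i \<Longrightarrow> i \<le> n - 1 \<Longrightarrow> 1 \<le> j \<Longrightarrow> j \<le> n - 1 \<Longrightarrow> i + 2 \<le> j \<or> j + 2 \<le> i \<Longrightarrow>
  Dw n [sg i, sg j] = Dw n [sg j, sg i]"
proof -
  assume a: "1 \<le> i" "i \<le> n - 1" "1 \<le> j" "j \<le> n - 1" "i + 2 \<le> j \<or> j + 2 \<le> i"
  have "rfl n (i, i+1) (rfl n (j, j+1) f) = rfl n (j, j+1) (rfl n (i, i+1) f)" for f
    using a by (intro rfl_comm) (auto simp: Pn_def cf_def)
  then show ?thesis by (auto simp: sg_def fun_eq_iff Dgen_def)
qed

lemma DR7: "i + 2 \<le> j \<or> j + 2 \<le> i \<Longrightarrow> Dw n [rh i, rh j] = Dw n [rh j, rh i]"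
  by (auto simp: rh_def fun_eq_iff Dgen_def Tt_def tau_comm)

lemma DR8: "1 \<le> i \<Longrightarrow> i \<le> n - 1 \<Longrightarrow> 1 \<le> j \<Longrightarrow> j \<le> n - 1 \<Longrightarrow> i + 2 \<le> j \<or> j + 2 \<le> i \<Longrightarrow>
  Dw n [rh i, sg j] = Dw n [sg j, rh i]"
proof -
  assume a: "1 \<le> i" "i \<le> n - 1" "1 \<le> j" "j \<le> n - 1" "i + 2 \<le> j \<or> j + 2 \<le> i"
  have Tq: "Tt i (j, j+1) = (j, j+1)" using a(5) by (auto simp: Tt_def tau_def)
  have "rfl n (j, j+1) (f \<circ> Tt i) = rfl n (j, j+1) f \<circ> Tt i" for f
    using rfl_equiv[OF inj_Tt Tt_Pn cf_Tt, of i n "(j, j+1)" f] a Tq by simp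
  then show ?thesis by (auto simp: sg_def rh_def fun_eq_iff Dgen_def)
qed

lemma D_rel:
  assumes "(l, r) \<in> fvb_rels n"
  shows "Dw n l = Dw n r"
  using assms unfolding fvb_rels_def
  apply (elim UnE CollectE exE conjE)
         apply (simp_all del: Dw.simps add: DR1 DR2 DR3 DR4 DR5 DR8)
   apply (rule DR6; simp)
  apply (rule DR7; simp)
  done

lemma D_fvb_eq: "fvb_eq n u v \<Longrightarrow> Dw n u = Dw n v"
proof (induction rule: fvb_eq.induct)
  case (rel l r u v)
  show ?case by (rule ext) (simp add: Dw_append D_rel[OF rel.hyps])
qed auto


definition mk :: "int \<Rightarrow> int \<Rightarrow> int \<Rightarrow> nat \<times> nat \<Rightarrow> int" where
  "mk u v w = (\<lambda>r. if r = (1,2) then u else if r = (1,3) then v else if r = (3,2) then w else 0)"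

lemma J_Pn: "3 \<le> n \<Longrightarrow> {(1,2),(1,3),(3,2)} \<subseteq> Pn n"
  by (auto simp: Pn_def)

lemma Lf_mk:
  assumes "3 \<le> n"
  shows "Lf n p (mk u v w) = cf p (1,2) * u + cf p (1,3) * v + cf p (3,2) * w"
proof -
  have "Lf n p (mk u v w) = (\<Sum>r\<in>{(1,2),(1,3),(3,2)}. cf p r * mk u v w r)"
    unfolding Lf_def
    by (rule sum.mono_neutral_right) (use J_Pn[OF assms] in \<open>auto simp: mk_def\<close>)
  also have "\<dots> = cf p (1,2) * u + cf p (1,3) * v + cf p (3,2) * w"
    by (simp add: mk_def)
  finally show ?thesis .
qed

lemma rfl12: "3 \<le> n \<Longrightarrow> rfl n (1,2) (mk u v w) = mk (-u + 2*v + 2*w) v w"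
  by (simp add: rfl_def Lf_mk cf_def) (auto simp: mk_def fun_eq_iff)
lemma rfl13: "3 \<le> n \<Longrightarrow> rfl n (1,3) (mk u v w) = mk u (2*u - v + w) w"
  by (simp add: rfl_def Lf_mk cf_def) (auto simp: mk_def fun_eq_iff)
lemma rfl32: "3 \<le> n \<Longrightarrow> rfl n (3,2) (mk u v w) = mk u v (2*u + v - w)"
  by (simp add: rfl_def Lf_mk cf_def) (auto simp: mk_def fun_eq_iff)

lemma Dgen_sg1: "Dgen n (False, Suc 0) = rfl n (Suc 0, 2)"
  by (simp add: Dgen_def numeral_2_eq_2)
lemma Dgen_rh: "Dgen n (True, i) = (\<lambda>f. f \<circ> Tt i)"
  by (simp add: Dgen_def)

lemma rfl12': "3 \<le> n \<Longrightarrow> rfl n (Suc 0,2) (mk u v w) = mk (-u + 2*v + 2*w) v w"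
  using rfl12 by simp
lemma rfl13': "3 \<le> n \<Longrightarrow> rfl n (Suc 0,3) (mk u v w) = mk u (2*u - v + w) w"
  using rfl13 by simp

lemma D_conj2: assumes "3 \<le> n" shows "Dw n [(True,2),(False,1),(True,2)] f = rfl n (1,3) f"
proof -
  have e: "rfl n (1,2) (f \<circ> Tt 2) = rfl n (Tt 2 (1,2)) f \<circ> Tt 2"
    by (rule rfl_equiv[OF inj_Tt Tt_Pn cf_Tt]) (use assms in auto)
  have t: "Tt 2 (1,2) = (1,3)" by (simp add: Tt_def tau_def)
  have "Dw n [(True,2),(False,1),(True,2)] f = rfl n (1,2) (f \<circ> Tt 2) \<circ> Tt 2"
    by (simp add: Dgen_sg1 Dgen_rh)
  also have "\<dots> = (rfl n (1,3) f \<circ> Tt 2) \<circ> Tt 2" by (simp only: e t)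
  also have "\<dots> = rfl n (1,3) f" by (rule ext) simp
  finally show ?thesis .
qed

lemma D_conjX: assumes "3 \<le> n"
  shows "Dw n ([(True,1),(True,2),(True,1)] @ [(False,1)] @ [(True,1),(True,2),(True,1)]) f = rfl n (3,2) f"
proof -
  let ?T = "Tt 1 \<circ> Tt 2 \<circ> Tt 1"
  have injT: "inj ?T" by (intro inj_compose inj_Tt)
  have i1: "Tt 1 ` Pn n = Pn n" using assms by (intro Tt_Pn) auto
  have i2: "Tt 2 ` Pn n = Pn n" using assms by (intro Tt_Pn) auto
  have imgT: "?T ` Pn n = Pn n"
  proof -
    have "?T ` Pn n = Tt 1 ` (Tt 2 ` (Tt 1 ` Pn n))" by (simp add: image_comp)
    then show ?thesis by (simp only: i1 i2)
  qed
  have cfT: "cf (?T p) (?T r) = cf p r" for p r by (simp add: cf_Tt)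
  have e: "rfl n (1,2) (f \<circ> ?T) = rfl n (?T (1,2)) f \<circ> ?T"
    by (rule rfl_equiv[OF injT imgT cfT])
  have t: "?T (1,2) = (3,2)" by (simp add: Tt_def tau_def)
  have tt: "?T (?T q) = q" for q by (cases q) (simp add: Tt_def tau_def)
  have "Dw n ([(True,1),(True,2),(True,1)] @ [(False,1)] @ [(True,1),(True,2),(True,1)]) f
        = rfl n (1,2) (f \<circ> ?T) \<circ> ?T"
    by (simp add: Dgen_sg1 Dgen_rh comp_assoc)
  also have "\<dots> = (rfl n (3,2) f \<circ> ?T) \<circ> ?T" by (simp only: e t)
  also have "\<dots> = rfl n (3,2) f" by (rule ext) simp
  finally show ?thesis .
qed

lemma mk_eq_iff: "mk a b c = mk a' b' c' \<longleftrightarrow> a = a' \<and> b = b' \<and> c = c'"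
proof
  assume "mk a b c = mk a' b' c'"
  then have "mk a b c (1,2) = mk a' b' c' (1,2)" "mk a b c (1,3) = mk a' b' c' (1,3)"
    "mk a b c (3,2) = mk a' b' c' (3,2)" by simp_all
  then show "a = a' \<and> b = b' \<and> c = c'" by (simp add: mk_def)
qed simp

definition ablk :: "(bool \<times> nat) list" where "ablk = [(False,1),(True,2),(False,1),(True,2)]"
definition rablk :: "(bool \<times> nat) list" where "rablk = [(True,2),(False,1),(True,2),(False,1)]"
definition Xw :: "(bool \<times> nat) list" where "Xw = [(True,1),(True,2),(True,1)]"
definition bblk :: "(bool \<times> nat) list" where "bblk = [(False,1)] @ Xw @ [(False,1)] @ Xw"
definition rbblk :: "(bool \<times> nat) list" where "rbblk = Xw @ [(False,1)] @ Xw @ [(False,1)]"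

lemma aw_blk: "aw = ablk @ ablk @ ablk" by (simp add: aw_def ablk_def numeral_eq_Suc)
lemma raw_blk: "rev aw = rablk @ rablk @ rablk" by (simp add: aw_def rablk_def numeral_eq_Suc)
lemma bw_blk: "bw = bblk @ bblk @ bblk" by (simp add: bw_def bblk_def Xw_def numeral_eq_Suc)
lemma rbw_blk: "rev bw = rbblk @ rbblk @ rbblk" by (simp add: bw_def rbblk_def Xw_def numeral_eq_Suc)

lemma D_ablk: "3 \<le> n \<Longrightarrow> Dw n ablk f = rfl n (1,3) (rfl n (1,2) f)"
  using D_conj2[of n "Dw n [(False,1)] f"] Dw_append[of n "[(False,1)]" "[(True,2),(False,1),(True,2)]" f]
  by (simp add: ablk_def Dgen_sg1)

lemma D_rablk: "3 \<le> n \<Longrightarrow> Dw n rablk f = rfl n (1,2) (rfl n (1,3) f)"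
  using D_conj2[of n f] Dw_append[of n "[(True,2),(False,1),(True,2)]" "[(False,1)]" f]
  by (simp add: rablk_def Dgen_sg1)

lemma D_bblk: "3 \<le> n \<Longrightarrow> Dw n bblk f = rfl n (3,2) (rfl n (1,2) f)"
  using D_conjX[of n "Dw n [(False,1)] f"] Dw_append[of n "[(False,1)]" "Xw @ [(False,1)] @ Xw" f]
  by (simp add: bblk_def Xw_def Dgen_sg1)

lemma D_rbblk: "3 \<le> n \<Longrightarrow> Dw n rbblk f = rfl n (1,2) (rfl n (3,2) f)"
  using D_conjX[of n f] Dw_append[of n "Xw @ [(False,1)] @ Xw" "[(False,1)]" f]
  by (simp add: rbblk_def Xw_def Dgen_sg1)

lemma D_aw: "3 \<le> n \<Longrightarrow> Dw n aw (mk u v w) = mk (-5*u+6*v+24*w) (-6*u+7*v+33*w) w"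
  by (simp add: aw_blk Dw_append D_ablk rfl12' rfl13' mk_eq_iff algebra_simps)
lemma D_raw: "3 \<le> n \<Longrightarrow> Dw n (rev aw) (mk u v w) = mk (7*u-6*v+30*w) (6*u-5*v+21*w) w"
  by (simp only: raw_blk Dw_append D_rablk rfl12 rfl13 mk_eq_iff) (simp add: algebra_simps)
lemma D_bw: "3 \<le> n \<Longrightarrow> Dw n bw (mk u v w) = mk (-5*u+24*v+6*w) v (-6*u+33*v+7*w)"
  by (simp add: bw_blk Dw_append D_bblk rfl12' rfl32 mk_eq_iff algebra_simps)
lemma D_rbw: "3 \<le> n \<Longrightarrow> Dw n (rev bw) (mk u v w) = mk (7*u+30*v-6*w) v (6*u+21*v-5*w)"
  by (simp only: rbw_blk Dw_append D_rbblk rfl12 rfl32 mk_eq_iff) (simp add: algebra_simps)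


definition blkw :: "bool \<times> bool \<Rightarrow> (bool \<times> nat) list" where
  "blkw t = (if fst t then (if snd t then bw else rev bw) else (if snd t then aw else rev aw))"

definition subst :: "bool fword \<Rightarrow> (bool \<times> nat) list" where
  "subst vs = concat (map blkw vs)"

definition Mt :: "bool \<times> bool \<Rightarrow> int \<times> int \<times> int \<Rightarrow> int \<times> int \<times> int" where
  "Mt t x = (case x of (u, v, w) \<Rightarrow>
     (if fst t then (if snd t then (-5*u+24*v+6*w, v, -6*u+33*v+7*w) else (7*u+30*v-6*w, v, 6*u+21*v-5*w))
      else (if snd t then (-5*u+6*v+24*w, -6*u+7*v+33*w, w) else (7*u-6*v+30*w, 6*u-5*v+21*w, w))))"

definition PP :: "bool \<times> bool \<Rightarrow> int \<times> int \<times> int \<Rightarrow> bool" where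
  "PP t x = (case x of (u, v, w) \<Rightarrow> v > 0 \<and> w > 0 \<and>
     (if fst t then
        (if snd t then 2*(u-w) \<le> -15*v \<and> w \<le> 2*(u-v) \<and> u-v < w
         else u-w \<ge> 9*v \<and> w < u-v \<and> 5*(u-v) \<le> 7*w)
      else
        (if snd t then 2*(u-v) \<le> -15*w \<and> v \<le> 2*(u-w) \<and> u-w < v
         else u-v \<ge> 9*w \<and> v < u-w \<and> 5*(u-w) \<le> 7*v)))"

definition mkt :: "int \<times> int \<times> int \<Rightarrow> nat \<times> nat \<Rightarrow> int" where
  "mkt x = (case x of (u, v, w) \<Rightarrow> mk u v w)"

lemma D_blkw: "3 \<le> n \<Longrightarrow> Dw n (blkw t) (mkt x) = mkt (Mt t x)"
  by (cases x) (auto simp: blkw_def mkt_def Mt_def D_aw D_raw D_bw D_rbw)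

lemma PP_step0: "(s1,s2) \<noteq> iv (t1,t2) \<Longrightarrow> PP (s1,s2) (u,v,w) \<Longrightarrow> PP (t1,t2) (Mt (t1,t2) (u,v,w))"
  apply (cases s1; cases s2; cases t1; cases t2)
  apply (simp_all add: PP_def Mt_def)
  done

lemma PP_step: "s \<noteq> iv t \<Longrightarrow> PP s x \<Longrightarrow> PP t (Mt t x)"
  using PP_step0[of "fst s" "snd s" "fst t" "snd t" "fst x" "fst (snd x)" "snd (snd x)"] by simp

lemma PP_base: "PP t (Mt t (1,1,1))"
  by (cases t) (auto simp: PP_def Mt_def)

lemma PP_not: "\<not> PP t (1,1,1)"
  by (cases t) (auto simp: PP_def)

lemma reduced_snoc: "reduced (xs @ [t]) \<Longrightarrow> xs \<noteq> [] \<Longrightarrow> reduced xs \<and> t \<noteq> iv (last xs)"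
proof (induction xs rule: reduced.induct)
  case 1 then show ?case by simp
next
  case (2 a) then show ?case by simp
next
  case (3 a b bs)
  then show ?case by (cases bs) auto
qed

lemma subst_snoc: "subst (xs @ [t]) = subst xs @ blkw t"
  by (simp add: subst_def)

lemma pingpong:
  assumes n: "3 \<le> n"
  shows "reduced vs \<Longrightarrow> vs \<noteq> [] \<Longrightarrow> \<exists>x. Dw n (subst vs) (mk 1 1 1) = mkt x \<and> PP (last vs) x"
proof (induction vs rule: rev_induct)
  case Nil then show ?case by simp
next
  case (snoc t xs)
  show ?case
  proof (cases "xs = []")
    case True
    have "Dw n (subst [t]) (mk 1 1 1) = mkt (Mt t (1,1,1))"
      using D_blkw[OF n, of t "(1,1,1)"] by (simp add: subst_def mkt_def)
    then show ?thesis using True PP_base[of t] by (intro exI[of _ "Mt t (1,1,1)"]) simp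
  next
    case False
    from reduced_snoc[OF snoc.prems(1) False] have r: "reduced xs" and nt: "t \<noteq> iv (last xs)" by auto
    obtain x where x: "Dw n (subst xs) (mk 1 1 1) = mkt x" "PP (last xs) x"
      using snoc.IH[OF r False] by blast
    have ne: "last xs \<noteq> iv t" using nt by auto
    have "Dw n (subst (xs @ [t])) (mk 1 1 1) = mkt (Mt t x)"
      by (simp add: subst_snoc Dw_append x(1) D_blkw[OF n])
    then show ?thesis using PP_step[OF ne x(2)] by (intro exI[of _ "Mt t x"]) simp
  qed
qed

lemma pp_inj:
  assumes "3 \<le> n" "reduced vs" "Dw n (subst vs) (mk 1 1 1) = mk 1 1 1"
  shows "vs = []"
proof (rule ccontr)
  assume "vs \<noteq> []"
  then obtain x where x: "Dw n (subst vs) (mk 1 1 1) = mkt x" "PP (last vs) x"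
    using pingpong[OF assms(1) assms(2)] by blast
  obtain u v w where "x = (u, v, w)" by (cases x)
  with x assms(3) have "x = (1,1,1)" by (simp add: mkt_def mk_eq_iff)
  with x(2) PP_not show False by simp
qed


lemma U_R1: "reduced h \<Longrightarrow> Uw [sg i, sg i] h = Uw [] h" using UR1[of h i] by (simp add: sg_def)
lemma U_R2: "reduced h \<Longrightarrow> Uw [rh i, rh i] h = Uw [] h" using UR2[of h i] by (simp add: rh_def)
lemma U_R3: "Uw [sg i, sg (Suc i), sg i] h = Uw [sg (Suc i), sg i, sg (Suc i)] h" using UR3[of i h] by (simp add: sg_def)
lemma U_R4: "Uw [rh i, rh (Suc i), rh i] h = Uw [rh (Suc i), rh i, rh (Suc i)] h" using UR4[of i h] by (simp add: rh_def)
lemma U_R5: "Uw [rh i, rh (Suc i), sg i] h = Uw [sg (Suc i), rh i, rh (Suc i)] h" using UR5[of i h] by (simp add: rh_def sg_def)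
lemma U_R6: "i + 2 \<le> j \<or> j + 2 \<le> i \<Longrightarrow> Uw [sg i, sg j] h = Uw [sg j, sg i] h" using UR6[of i j h] by (simp add: sg_def)
lemma U_R7: "i + 2 \<le> j \<or> j + 2 \<le> i \<Longrightarrow> Uw [rh i, rh j] h = Uw [rh j, rh i] h" using UR7[of i j h] by (simp add: rh_def)
lemma U_R8: "i + 2 \<le> j \<or> j + 2 \<le> i \<Longrightarrow> Uw [rh i, sg j] h = Uw [sg j, rh i] h" using UR8[of i j h] by (simp add: rh_def sg_def)

lemma U_rel:
  assumes "(l, r) \<in> fvb_rels n" "reduced h"
  shows "Uw l h = Uw r h"
  using assms unfolding fvb_rels_def
  apply (elim UnE CollectE exE conjE)
         apply (simp_all del: Uw.simps add: U_R1 U_R2 U_R3 U_R4 U_R5 U_R8)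
   apply (rule U_R6; simp)
  apply (rule U_R7; simp)
  done

lemma Uw_reduced: "reduced h \<Longrightarrow> reduced (Uw u h)"
  by (induction u arbitrary: h) (auto simp: Ugen_def)

lemma Uw_fvb_eq: "fvb_eq n u v \<Longrightarrow> reduced h \<Longrightarrow> Uw u h = Uw v h"
proof (induction arbitrary: h rule: fvb_eq.induct)
  case (sym u v) then show ?case by metis
next
  case (trans u v x) then show ?case by metis
next
  case (rel l r u v)
  have "reduced (Uw u h)" using rel.prems by (rule Uw_reduced)
  then show ?case by (simp add: Uw_append U_rel[OF rel.hyps])
qed auto

lemma set_aw: "set aw = {(False,1),(True,2)}" by (auto simp: aw_def numeral_eq_Suc)
lemma set_bw: "set bw = {(False,1),(True,1),(True,2)}" by (auto simp: bw_def numeral_eq_Suc)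

lemma valid_aw: "3 \<le> n \<Longrightarrow> set aw \<subseteq> fvb_gens n" by (auto simp: set_aw fvb_gens_def)
lemma valid_bw: "3 \<le> n \<Longrightarrow> set bw \<subseteq> fvb_gens n" by (auto simp: set_bw fvb_gens_def)
lemma valid_blkw: "3 \<le> n \<Longrightarrow> set (blkw t) \<subseteq> fvb_gens n"
  using valid_aw valid_bw by (auto simp: blkw_def)
lemma valid_subst: "3 \<le> n \<Longrightarrow> set (subst vs) \<subseteq> fvb_gens n"
  using valid_blkw by (fastforce simp: subst_def)

lemma Uw_rev_ker:
  assumes "3 \<le> n" "set u \<subseteq> fvb_gens n" "\<And>h. reduced h \<Longrightarrow> Uw u h = h" "reduced h"
  shows "Uw (rev u) h = h"
proof -
  have "Uw (rev u) h = Uw (rev u) (Uw u h)" using assms by simp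
  also have "\<dots> = Uw (u @ rev u) h" by (simp add: Uw_append)
  also have "\<dots> = Uw [] h"
    using Uw_fvb_eq[OF fvb_rev_cancel'[OF assms(2), of "[]" "[]"] assms(4)] by simp
  finally show ?thesis by simp
qed

lemma Uw_blkw: "3 \<le> (n::nat) \<Longrightarrow> reduced h \<Longrightarrow> Uw (blkw t) h = h"
  using aw_ker bw_ker Uw_rev_ker[OF _ valid_aw aw_ker] Uw_rev_ker[OF _ valid_bw bw_ker]
  by (auto simp: blkw_def)

lemma Uw_subst: "3 \<le> (n::nat) \<Longrightarrow> reduced h \<Longrightarrow> Uw (subst vs) h = h"
  by (induction vs) (simp_all add: subst_def Uw_append Uw_blkw)

definition hmap :: "nat \<Rightarrow> bool fword \<Rightarrow> (bool \<times> nat) list set" where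
  "hmap n vs = fvb_class n (subst vs)"

lemma Theta_hmap:
  assumes "3 \<le> n" "f \<in> carrier (F2n n)"
  shows "Theta n w (hmap n vs) f = f"
proof -
  define u0 where "u0 = (SOME u. u \<in> hmap n vs)"
  have "subst vs \<in> hmap n vs" by (simp add: hmap_def fvb_class_def fvb_eq.refl)
  then have "u0 \<in> hmap n vs" unfolding u0_def by (rule someI)
  then have e: "fvb_eq n (subst vs) u0" by (simp add: hmap_def fvb_class_def)
  have rf: "reduced f" using assms(2) by (simp add: F2n_def free_grp_def)
  have rl: "reduced (map liftl f)" by (rule reduced_lift[OF rf])
  have "Theta n w (hmap n vs) f = theta_word w u0 (ext (Sm w) (map liftl f))"
    by (simp add: Theta_def u0_def ext_Sm_lift reduce_idem[OF rf])
  also have "\<dots> = ext (Sm w) (Uw u0 (map liftl f))" by (rule theta_word_fact)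
  also have "Uw u0 (map liftl f) = Uw (subst vs) (map liftl f)"
    using Uw_fvb_eq[OF e rl] by simp
  also have "\<dots> = map liftl f" using Uw_subst[OF assms(1) rl] .
  finally show ?thesis by (simp add: ext_Sm_lift reduce_idem[OF rf])
qed

lemma blkw_iv: "blkw (iv t) = rev (blkw t)"
  by (cases t) (simp add: blkw_def iv_def)

lemma subst_red_cons:
  assumes "3 \<le> n"
  shows "fvb_eq n (subst (red_cons a L)) (blkw a @ subst L)"
proof (cases L)
  case Nil then show ?thesis by (simp add: subst_def fvb_eq.refl)
next
  case (Cons b L')
  show ?thesis
  proof (cases "b = iv a")
    case True
    have "fvb_eq n (blkw a @ rev (blkw a) @ subst L') (subst L')"
      using fvb_rev_cancel'[OF valid_blkw[OF assms], of "[]" a "subst L'"] by simp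
    then show ?thesis using Cons True by (simp add: subst_def blkw_iv fvb_eq.sym)
  next
    case False
    then show ?thesis using Cons by (simp add: subst_def fvb_eq.refl)
  qed
qed

lemma subst_reduce:
  assumes "3 \<le> n"
  shows "fvb_eq n (subst (reduce xs)) (subst xs)"
proof (induction xs)
  case Nil then show ?case by (simp add: subst_def fvb_eq.refl)
next
  case (Cons x xs)
  have "fvb_eq n (subst (red_cons x (reduce xs))) (blkw x @ subst (reduce xs))"
    by (rule subst_red_cons[OF assms])
  moreover have "fvb_eq n (blkw x @ subst (reduce xs)) (blkw x @ subst xs)"
    by (rule fvb_eq_app[OF fvb_eq.refl Cons.IH])
  ultimately show ?case by (simp add: reduce_Cons subst_def) (blast intro: fvb_eq.trans)
qed

lemma hmap_hom: "3 \<le> n \<Longrightarrow> hmap n \<in> hom F2 (FVB n)"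
proof (rule homI)
  assume n: "3 \<le> n"
  fix x assume "x \<in> carrier F2"
  then show "hmap n x \<in> carrier (FVB n)"
    using valid_subst[OF n] by (auto simp: hmap_def fvb_carrier)
next
  assume n: "3 \<le> n"
  fix x y assume "x \<in> carrier F2" "y \<in> carrier F2"
  have "hmap n (x \<otimes>\<^bsub>F2\<^esub> y) = fvb_class n (subst (reduce (x @ y)))"
    by (simp add: hmap_def F2_def free_grp_def)
  also have "\<dots> = fvb_class n (subst x @ subst y)"
    using subst_reduce[OF n, of "x @ y"] by (simp add: fvb_class_eq_iff subst_def)
  also have "\<dots> = hmap n x \<otimes>\<^bsub>FVB n\<^esub> hmap n y" by (simp add: hmap_def fvb_mult_class)
  finally show "hmap n (x \<otimes>\<^bsub>F2\<^esub> y) = hmap n x \<otimes>\<^bsub>FVB n\<^esub> hmap n y" .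
qed


theorem theorem3p2:
  fixes n :: nat and w :: "bool fword"
  assumes "n \<ge> 3" and "w \<in> carrier F2"
  shows "\<exists>H. subgroup H (FVB n) \<and> H \<subseteq> ker_Theta n w
             \<and> (FVB n)\<lparr>carrier := H\<rparr> \<cong> F2"
proof -
  have n: "3 \<le> n" using assms(1) by simp
  interpret gh: group_hom F2 "FVB n" "hmap n"
    unfolding group_hom_def group_hom_axioms_def using group_F2 group_FVB hmap_hom[OF n] by simp
  let ?H = "hmap n ` carrier F2"
  have sub: "subgroup ?H (FVB n)" by (rule gh.img_is_subgroup)
  have ker: "?H \<subseteq> ker_Theta n w"
    unfolding ker_Theta_def using Theta_hmap[OF n] gh.hom_closed by auto
  have kernel: "kernel F2 (FVB n) (hmap n) = {\<one>\<^bsub>F2\<^esub>}"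
  proof
    show "kernel F2 (FVB n) (hmap n) \<subseteq> {\<one>\<^bsub>F2\<^esub>}"
    proof
      fix x assume "x \<in> kernel F2 (FVB n) (hmap n)"
      then have x: "x \<in> carrier F2" "hmap n x = \<one>\<^bsub>FVB n\<^esub>" by (auto simp: kernel_def)
      then have "fvb_eq n (subst x) []" by (simp add: hmap_def fvb_one fvb_class_eq_iff)
      then have "Dw n (subst x) = Dw n []" by (rule D_fvb_eq)
      then have "Dw n (subst x) (mk 1 1 1) = mk 1 1 1" by simp
      moreover have "reduced x" using x(1) by (simp add: F2_def free_grp_def)
      ultimately have "x = []" using pp_inj[OF n] by blast
      then show "x \<in> {\<one>\<^bsub>F2\<^esub>}" by (simp add: F2_def free_grp_def)
    qed
  next
    show "{\<one>\<^bsub>F2\<^esub>} \<subseteq> kernel F2 (FVB n) (hmap n)"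
      by (simp add: kernel_def gh.hom_one)
  qed
  have inj: "inj_on (hmap n) (carrier F2)" using gh.inj_iff_trivial_ker kernel by simp
  have "hmap n \<in> iso F2 ((FVB n)\<lparr>carrier := ?H\<rparr>)"
    using inj hmap_hom[OF n] by (auto simp: iso_def hom_def bij_betw_def)
  then have "F2 \<cong> (FVB n)\<lparr>carrier := ?H\<rparr>" by (rule is_isoI)
  then have "(FVB n)\<lparr>carrier := ?H\<rparr> \<cong> F2" by (rule group.iso_sym[OF group_F2])
  then show ?thesis using sub ker by blast
qed


end
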